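(* Let $S$ be a compact convex subset of $\mathbb{R}^n_+$ with $0\in S$ and let $\Gamma\neq\mathbb{R}^n$ be a closed convex cone in $\mathbb{R}^n$ containing at least one point of $]0,\infty[^n$. Then $$\widehat S_\Gamma=(S-\Gamma^\circ)\cap\mathbb{R}^n_+,$$ and $\varphi_{\widehat S_\Gamma}(\xi)=\varphi_S(\xi)$ for every $\xi\in\Gamma$. Moreover, if for every $\xi\in\mathbb{R}^n$ and every extreme point $x$ of $\widehat S_\Gamma$ there exists $\eta\in\Gamma$ such that $\langle x,\xi\rangle\le\langle x,\eta\rangle$ and $\varphi_S(\eta)=\varphi_S(\xi)$, then $S=\widehat S_\Gamma$.
   Context: $\mathbb{R}_+=[0,\infty)$. For a set $T\subset\mathbb{R}^n$, $\varphi_T(\xi)=\sup_{t\in T}\langle t,\xi\rangle$. A cone is a set $\Gamma$ with $t\xi\in\Gamma$ for $\xi\in\Gamma$, $t\ge0$. The dual cone is $\Gamma^\circ=\{x\in\mathbb{R}^n\,;\,\langle x,\xi\rangle\ge0\ \forall\xi\in\Gamma\}$. The $\Gamma$-hull of $S\subset\mathbb{R}^n_+$ is $\widehat S_\Gamma=\{x\in\mathbb{R}^n_+\,;\,\langle x,\xi\rangle\le\varphi_S(\xi)\ \forall\xi\in\Gamma\}$, and $S-\Gamma^\circ=\{s-t\,;\,s\in S,t\in\Gamma^\circ\}$. *)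

theory Defs
  imports "HOL-Analysis.Analysis"
begin

definition nonneg_orthant :: "(real^'n) set" where
  "nonneg_orthant = {x. \<forall>i. 0 \<le> x $ i}"

definition pos_orthant :: "(real^'n) set" where
  "pos_orthant = {x. \<forall>i. 0 < x $ i}"

definition supp_fun :: "(real^'n) set \<Rightarrow> real^'n \<Rightarrow> real" where
  "supp_fun T \<xi> = (SUP t\<in>T. t \<bullet> \<xi>)"

definition is_cone :: "(real^'n) set \<Rightarrow> bool" where
  "is_cone \<Gamma> \<longleftrightarrow> (\<forall>\<xi>\<in>\<Gamma>. \<forall>t::real. t \<ge> 0 \<longrightarrow> t *\<^sub>R \<xi> \<in> \<Gamma>)"

definition dual_cone :: "(real^'n) set \<Rightarrow> (real^'n) set" where
  "dual_cone \<Gamma> = {x. \<forall>\<xi>\<in>\<Gamma>. 0 \<le> x \<bullet> \<xi>}"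

definition gamma_hull :: "(real^'n) set \<Rightarrow> (real^'n) set \<Rightarrow> (real^'n) set" where
  "gamma_hull \<Gamma> S = {x \<in> nonneg_orthant. \<forall>\<xi>\<in>\<Gamma>. x \<bullet> \<xi> \<le> supp_fun S \<xi>}"

definition set_minus_set :: "(real^'n) set \<Rightarrow> (real^'n) set \<Rightarrow> (real^'n) set" where
  "set_minus_set S T = {s - t | s t. s \<in> S \<and> t \<in> T}"

end

theory Submission
  imports Defs
begin

lemma bipolar_aux:
  fixes \<Gamma> :: "(real^'n) set"
  assumes "is_cone \<Gamma>" "closed \<Gamma>" "convex \<Gamma>" "\<Gamma> \<noteq> {}" "\<xi> \<notin> \<Gamma>"
  shows "\<exists>t\<in>dual_cone \<Gamma>. t \<bullet> \<xi> < 0"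
proof -
  obtain a b where ab: "a \<bullet> \<xi> < b" "\<forall>x\<in>\<Gamma>. a \<bullet> x > b"
    using separating_hyperplane_closed_point[OF assms(3,2,5)] by blast
  obtain g where g: "g \<in> \<Gamma>" using assms(4) by blast
  have "0 \<in> \<Gamma>" using assms(1) g unfolding is_cone_def by (metis order_refl scaleR_zero_left)
  hence b0: "b < 0" using ab by force
  have "a \<in> dual_cone \<Gamma>"
    unfolding dual_cone_def
  proof (safe)
    fix x assume x: "x \<in> \<Gamma>"
    show "0 \<le> a \<bullet> x"
    proof (rule ccontr)
      assume neg: "\<not> 0 \<le> a \<bullet> x"
      define l where "l = b / (a \<bullet> x)"
      have "l \<ge> 0" using neg b0 unfolding l_def by (simp add: divide_nonpos_neg)
      hence "l *\<^sub>R x \<in> \<Gamma>" using assms(1) x unfolding is_cone_def by blast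
      hence "a \<bullet> (l *\<^sub>R x) > b" using ab by blast
      moreover have "a \<bullet> (l *\<^sub>R x) = b" using neg unfolding l_def by simp
      ultimately show False by simp
    qed
  qed
  thus ?thesis using ab b0 by force
qed

lemma supp_upper:
  fixes S :: "(real^'n) set"
  assumes "compact S" "s \<in> S"
  shows "s \<bullet> \<xi> \<le> supp_fun S \<xi>"
proof -
  have "bounded ((\<lambda>t. t \<bullet> \<xi>) ` S)"
    using assms(1) by (intro compact_imp_bounded compact_continuous_image) (auto intro: continuous_intros)
  hence "bdd_above ((\<lambda>t. t \<bullet> \<xi>) ` S)" by (rule bounded_imp_bdd_above)
  thus ?thesis unfolding supp_fun_def using assms(2) by (rule cSUP_upper2) simp
qed

lemma supp_least:
  fixes S :: "(real^'n) set"
  assumes "S \<noteq> {}" "\<And>s. s \<in> S \<Longrightarrow> s \<bullet> \<xi> \<le> c"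
  shows "supp_fun S \<xi> \<le> c"
  unfolding supp_fun_def using assms by (intro cSUP_least) auto

theorem proposition5p6:
  fixes S \<Gamma> :: "(real^'n) set"
  assumes "compact S" "convex S" "S \<subseteq> nonneg_orthant" "0 \<in> S"
    and "is_cone \<Gamma>" "closed \<Gamma>" "convex \<Gamma>" "\<Gamma> \<noteq> UNIV"
    and "\<Gamma> \<inter> pos_orthant \<noteq> {}"
  shows "gamma_hull \<Gamma> S = set_minus_set S (dual_cone \<Gamma>) \<inter> nonneg_orthant
    \<and> (\<forall>\<xi>\<in>\<Gamma>. supp_fun (gamma_hull \<Gamma> S) \<xi> = supp_fun S \<xi>)
    \<and> ((\<forall>\<xi>. \<forall>x. x extreme_point_of (gamma_hull \<Gamma> S) \<longrightarrow>
            (\<exists>\<eta>\<in>\<Gamma>. x \<bullet> \<xi> \<le> x \<bullet> \<eta> \<and> supp_fun S \<eta> = supp_fun S \<xi>))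
         \<longrightarrow> S = gamma_hull \<Gamma> S)"
proof -
  let ?H = "gamma_hull \<Gamma> S"
  have Gne: "\<Gamma> \<noteq> {}" using assms(9) by blast
  have SH: "S \<subseteq> ?H"
    unfolding gamma_hull_def using assms(3) supp_upper[OF assms(1)] by blast
  have D_eq: "set_minus_set S (dual_cone \<Gamma>) = (\<Union>x\<in> S. \<Union>y \<in> dual_cone \<Gamma>. {x - y})"
    unfolding set_minus_set_def by blast
  have dc_convex: "convex (dual_cone \<Gamma>)"
    unfolding dual_cone_def convex_def by (auto simp: inner_add_left intro!: add_nonneg_nonneg)
  have dc_closed: "closed (dual_cone \<Gamma>)"
  proof -
    have "dual_cone \<Gamma> = (\<Inter>\<xi>\<in>\<Gamma>. {x. 0 \<le> x \<bullet> \<xi>})" unfolding dual_cone_def by blast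
    thus ?thesis by (auto intro!: closed_INT closed_Collect_le continuous_intros)
  qed
  have dc_cone: "\<And>t l. t \<in> dual_cone \<Gamma> \<Longrightarrow> l \<ge> 0 \<Longrightarrow> l *\<^sub>R t \<in> dual_cone \<Gamma>"
    unfolding dual_cone_def by auto
  have zero_dc: "0 \<in> dual_cone \<Gamma>" unfolding dual_cone_def by simp
  have P1: "?H = set_minus_set S (dual_cone \<Gamma>) \<inter> nonneg_orthant"
  proof
    show "set_minus_set S (dual_cone \<Gamma>) \<inter> nonneg_orthant \<subseteq> ?H"
    proof
      fix x assume x: "x \<in> set_minus_set S (dual_cone \<Gamma>) \<inter> nonneg_orthant"
      then obtain s t where st: "x = s - t" "s \<in> S" "t \<in> dual_cone \<Gamma>"
        unfolding set_minus_set_def by blast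
      have "\<forall>\<xi>\<in>\<Gamma>. x \<bullet> \<xi> \<le> supp_fun S \<xi>"
      proof
        fix \<xi> assume "\<xi> \<in> \<Gamma>"
        hence "0 \<le> t \<bullet> \<xi>" using st(3) unfolding dual_cone_def by blast
        hence "x \<bullet> \<xi> \<le> s \<bullet> \<xi>" using st(1) by (simp add: inner_diff_left)
        thus "x \<bullet> \<xi> \<le> supp_fun S \<xi>" using supp_upper[OF assms(1) st(2), of \<xi>] by linarith
      qed
      thus "x \<in> ?H" using x unfolding gamma_hull_def by blast
    qed
  next
    show "?H \<subseteq> set_minus_set S (dual_cone \<Gamma>) \<inter> nonneg_orthant"
    proof
      fix x assume xH: "x \<in> ?H"
      have "x \<in> set_minus_set S (dual_cone \<Gamma>)"
      proof (rule ccontr)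
        assume nx: "x \<notin> set_minus_set S (dual_cone \<Gamma>)"
        have cv: "convex (set_minus_set S (dual_cone \<Gamma>))"
          unfolding D_eq by (rule convex_differences[OF assms(2) dc_convex])
        have cl: "closed (set_minus_set S (dual_cone \<Gamma>))"
          unfolding D_eq by (rule compact_closed_differences[OF assms(1) dc_closed])
        obtain a b where ab: "a \<bullet> x < b" "\<forall>y\<in>set_minus_set S (dual_cone \<Gamma>). a \<bullet> y > b"
          using separating_hyperplane_closed_point[OF cv cl nx] by blast
        have mem: "\<And>s t. s \<in> S \<Longrightarrow> t \<in> dual_cone \<Gamma> \<Longrightarrow> s - t \<in> set_minus_set S (dual_cone \<Gamma>)"
          unfolding set_minus_set_def by blast
        have "- a \<in> \<Gamma>"
        proof (rule ccontr)
          assume "- a \<notin> \<Gamma>"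
          then obtain t where t: "t \<in> dual_cone \<Gamma>" "t \<bullet> (- a) < 0"
            using bipolar_aux[OF assms(5,6,7) Gne] by blast
          define l where "l = \<bar>b\<bar> / (a \<bullet> t)"
          have at: "a \<bullet> t > 0" using t(2) by (simp add: inner_commute)
          have "l \<ge> 0" unfolding l_def using at by simp
          hence "a \<bullet> (0 - l *\<^sub>R t) > b" using ab(2) mem[OF assms(4) dc_cone[OF t(1)]] by blast
          moreover have "a \<bullet> (0 - l *\<^sub>R t) = - l * (a \<bullet> t)" by simp
          moreover have "l * (a \<bullet> t) = \<bar>b\<bar>" unfolding l_def using at
            by (simp add: field_simps)
          ultimately show False using at by linarith
        qed
        moreover have "supp_fun S (- a) \<le> - b"
        proof (rule supp_least)
          fix s assume "s \<in> S"
          hence "a \<bullet> s > b" using ab(2) mem[OF _ zero_dc, of s] by simp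
          thus "s \<bullet> (- a) \<le> - b" by (simp add: inner_commute)
        qed (use assms(4) in blast)
        ultimately have "x \<bullet> (- a) \<le> - b" using xH unfolding gamma_hull_def by fastforce
        thus False using ab(1) by (simp add: inner_commute)
      qed
      thus "x \<in> set_minus_set S (dual_cone \<Gamma>) \<inter> nonneg_orthant"
        using xH unfolding gamma_hull_def by blast
    qed
  qed
  have P2: "\<forall>\<xi>\<in>\<Gamma>. supp_fun ?H \<xi> = supp_fun S \<xi>"
  proof
    fix \<xi> assume xi: "\<xi> \<in> \<Gamma>"
    have le: "supp_fun ?H \<xi> \<le> supp_fun S \<xi>"
      using SH assms(4) xi by (intro supp_least) (auto simp: gamma_hull_def)
    have bd: "bdd_above ((\<lambda>t. t \<bullet> \<xi>) ` ?H)"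
      using xi unfolding bdd_above_def gamma_hull_def by blast
    have "supp_fun S \<xi> \<le> supp_fun ?H \<xi>"
    proof (rule supp_least)
      fix s assume "s \<in> S"
      hence sH: "s \<in> ?H" using SH by blast
      show "s \<bullet> \<xi> \<le> supp_fun ?H \<xi>" unfolding supp_fun_def by (rule cSUP_upper2[OF bd sH]) simp
    qed (use assms(4) in blast)
    thus "supp_fun ?H \<xi> = supp_fun S \<xi>" using le by simp
  qed
  have P3: "(\<forall>\<xi>. \<forall>x. x extreme_point_of ?H \<longrightarrow>
            (\<exists>\<eta>\<in>\<Gamma>. x \<bullet> \<xi> \<le> x \<bullet> \<eta> \<and> supp_fun S \<eta> = supp_fun S \<xi>))
         \<longrightarrow> S = ?H"
  proof
    assume hyp: "\<forall>\<xi>. \<forall>x. x extreme_point_of ?H \<longrightarrow>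
            (\<exists>\<eta>\<in>\<Gamma>. x \<bullet> \<xi> \<le> x \<bullet> \<eta> \<and> supp_fun S \<eta> = supp_fun S \<xi>)"
    have Hconv: "convex ?H"
      unfolding P1 D_eq
      by (intro convex_Int convex_differences[OF assms(2) dc_convex])
         (auto simp: nonneg_orthant_def convex_def)
    have Hclosed: "closed ?H"
    proof -
      have "?H = (\<Inter>i. {x. 0 \<le> x $ i}) \<inter> (\<Inter>\<xi>\<in>\<Gamma>. {x. x \<bullet> \<xi> \<le> supp_fun S \<xi>})"
        unfolding gamma_hull_def nonneg_orthant_def by blast
      thus ?thesis by (auto intro!: closed_Int closed_INT closed_Collect_le continuous_intros)
    qed
    obtain p where p: "p \<in> \<Gamma>" "\<forall>i. 0 < p $ i" using assms(9) unfolding pos_orthant_def by blast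
    have "?H \<subseteq> cbox 0 (\<chi> i. supp_fun S p / p $ i)"
    proof
      fix x assume xH: "x \<in> ?H"
      have nn: "\<forall>i. 0 \<le> x $ i" using xH unfolding gamma_hull_def nonneg_orthant_def by blast
      have xp: "x \<bullet> p \<le> supp_fun S p" using xH p(1) unfolding gamma_hull_def by blast
      have "\<forall>i. x $ i \<le> supp_fun S p / p $ i"
      proof
        fix i
        have "x $ i * p $ i \<le> (\<Sum>j\<in>UNIV. x $ j * p $ j)"
          by (rule member_le_sum) (use nn p(2) in \<open>auto intro!: mult_nonneg_nonneg simp: less_imp_le\<close>)
        also have "\<dots> = x \<bullet> p" by (simp add: inner_vec_def)
        finally show "x $ i \<le> supp_fun S p / p $ i" using xp p(2)
          by (simp add: pos_le_divide_eq)
      qed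
      thus "x \<in> cbox 0 (\<chi> i. supp_fun S p / p $ i)" using nn by (simp add: mem_box_cart)
    qed
    hence "bounded ?H" using bounded_cbox bounded_subset by blast
    hence Hcomp: "compact ?H" using Hclosed by (simp add: compact_eq_bounded_closed)
    have ext: "{x. x extreme_point_of ?H} \<subseteq> S"
    proof
      fix x assume xe: "x \<in> {x. x extreme_point_of ?H}"
      hence xH: "x \<in> ?H" by (simp add: extreme_point_of_def)
      show "x \<in> S"
      proof (rule ccontr)
        assume nx: "x \<notin> S"
        obtain a b where ab: "a \<bullet> x < b" "\<forall>y\<in>S. a \<bullet> y > b"
          using separating_hyperplane_closed_point[OF assms(2) compact_imp_closed[OF assms(1)] nx] by blast
        have sS: "supp_fun S (- a) \<le> - b"
        proof (rule supp_least)
          fix s assume "s \<in> S"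
          hence "a \<bullet> s > b" using ab(2) by simp
          thus "s \<bullet> (- a) \<le> - b" by (simp add: inner_commute)
        qed (use assms(4) in blast)
        obtain \<eta> where eta: "\<eta> \<in> \<Gamma>" "x \<bullet> (- a) \<le> x \<bullet> \<eta>" "supp_fun S \<eta> = supp_fun S (- a)"
          using hyp xe by blast
        have "x \<bullet> \<eta> \<le> supp_fun S \<eta>" using xH eta(1) unfolding gamma_hull_def by blast
        thus False using eta sS ab(1) by (simp add: inner_commute)
      qed
    qed
    have "?H \<subseteq> S"
      using Krein_Milman_Minkowski[OF Hcomp Hconv] ext assms(2) by (metis hull_minimal)
    thus "S = ?H" using SH by blast
  qed
  show ?thesis using P1 P2 P3 by blast
qed

end
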